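(* Let $0<k<n$ be integers such that $s^{n,k}=\frac{n(n+1)}{2k}$ is an even integer. Let $\mathcal P=[p_1,\ldots,p_k]=[2^e,p^f,\ldots]$ be an ascending partition of $n$ of size $k$ with $e,f>0$ and $p\ge 3$; that is, $p_1=\cdots=p_e=2$, $p_{e+1}=\cdots=p_{e+f}=p$, and $p_i>p$ for all $i>e+f$. Let $c=s^{n,k}-n$, $C=\{x\in[n]:x\ge c\}$, $h=|C|-2e=2n-s^{n,k}+1-2e$, $m=s^{n,k}/2$, $\overline h=\lceil h/2\rceil$ and $\underline h=\lfloor h/2\rfloor$. Suppose that \[ m+\sum_{i=c-p+1}^{c-1} i < s^{n,k}, \] and define $g=h-f$ if $f\le \underline h$, and $g=\overline h-2(f-\underline h)$ if $f>\underline h$. If either (i) $g<0$, or (ii) $g\ge 0$ and, for $q=p_{e+f+g+1}$, $\sum_{i=c-q}^{c-1} i<s^{n,k}$, then $\mathcal P$ is non-equitable.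
   Context: $[n]=\{1,2,\ldots,n\}$. An ascending partition of $n$ of size $k$ is a sequence of positive integers $[p_1,\ldots,p_k]$ with $p_1\le\cdots\le p_k$ and $\sum_i p_i=n$. Such a partition is equitable if $[n]$ can be partitioned into sets $A_1,\dots,A_k$ with $|A_i|=p_i$ such that all the sums $\sum_{x\in A_i}x$ are equal (necessarily to $s^{n,k}$). The notation $[q_1^{e_1},q_2^{e_2},\ldots]$ with $q_1<q_2<\cdots$ means the ascending partition having exactly $e_i$ parts equal to $q_i$. *)

theory Defs
  imports Complex_Main
begin

definition ascending_partition :: "nat \<Rightarrow> nat \<Rightarrow> nat list \<Rightarrow> bool" where
  "ascending_partition n k P \<longleftrightarrow>
     length P = k \<and> (\<forall>x\<in>set P. 0 < x) \<and> sorted P \<and> sum_list P = n"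

definition equitable :: "nat \<Rightarrow> nat list \<Rightarrow> bool" where
  "equitable n P \<longleftrightarrow>
     (\<exists>A :: nat \<Rightarrow> nat set.
        (\<Union>i<length P. A i) = {1..n} \<and>
        (\<forall>i<length P. \<forall>j<length P. i \<noteq> j \<longrightarrow> A i \<inter> A j = {}) \<and>
        (\<forall>i<length P. card (A i) = P ! i) \<and>
        (\<forall>i<length P. \<forall>j<length P. \<Sum>(A i) = \<Sum>(A j)))"

end

theory Submission
  imports Defs
begin

lemma top_sum:
  fixes A :: "nat set" and cc :: nat
  assumes "finite A" "A \<subseteq> {1..<cc}"
  shows "2 * int (\<Sum>A) \<le> int (card A) * (2 * int cc - int (card A) - 1)"
  using assms
proof (induction "card A" arbitrary: A cc)
  case 0 then show ?case by simp
next
  case (Suc t)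
  then have ne: "A \<noteq> {}" by auto
  define x where "x = Max A"
  have xA: "x \<in> A" using Suc ne by (simp add: x_def)
  have xlt: "x < cc" using xA Suc.prems by auto
  have A': "A - {x} \<subseteq> {1..<x}" using Suc.prems Max_ge x_def by fastforce
  have ct: "card (A - {x}) = t" using Suc.hyps(2) xA Suc.prems(1) by simp
  have IH: "2 * int (\<Sum>(A - {x})) \<le> int t * (2 * int x - int t - 1)"
    using Suc.hyps(1)[of "A - {x}" x] ct A' Suc.prems(1) by simp
  have sA: "\<Sum>A = \<Sum>(A - {x}) + x" using sum.remove[OF Suc.prems(1) xA, of "\<lambda>y. y"] by simp
  have key: "int (Suc t) * (2 * int cc - int (Suc t) - 1) - (int t * (2 * int x - int t - 1) + 2 * int x)
     = 2 * (int t + 1) * (int cc - int x - 1)" by (simp add: algebra_simps)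
  have "0 \<le> 2 * (int t + 1) * (int cc - int x - 1)" using xlt by simp
  moreover have "2 * int (\<Sum>A) = 2*int(\<Sum>(A-{x})) + 2*int x" using sA by simp
  moreover have "card A = Suc t" using Suc.hyps(2) by simp
  ultimately show ?case using IH key by (simp only:)
qed

lemma low_sum:
  fixes A :: "nat set"
  assumes "finite A" "0 \<notin> A"
  shows "card A * (card A + 1) \<le> 2 * \<Sum>A"
  using assms
proof (induction "card A" arbitrary: A)
  case 0 then show ?case by simp
next
  case (Suc t)
  then have ne: "A \<noteq> {}" by auto
  define x where "x = Max A"
  have xA: "x \<in> A" using Suc ne by (simp add: x_def)
  have "A \<subseteq> {1..x}"
  proof
    fix y :: nat assume "y \<in> A"
    then have "y \<le> x" using Max_ge[OF Suc.prems(1)] x_def by auto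
    have "y \<noteq> 0" using \<open>y \<in> A\<close> Suc.prems(2) by (metis)
    then show "y \<in> {1..x}" using \<open>y \<le> x\<close> by simp
  qed
  then have "card A \<le> card {1..x}" by (intro card_mono) simp_all
  then have cx: "card A \<le> x" by simp
  have ct: "card (A - {x}) = t" using Suc.hyps(2) xA Suc.prems(1) by simp
  have IH: "t * (t+1) \<le> 2 * \<Sum>(A - {x})"
    using Suc.hyps(1)[of "A - {x}"] ct Suc.prems by simp
  have sA: "\<Sum>A = \<Sum>(A - {x}) + x" using sum.remove[OF Suc.prems(1) xA, of "\<lambda>y. y"] by simp
  have cA: "card A = Suc t" using Suc.hyps(2) by simp
  have "Suc t * (Suc t + 1) = t * (t+1) + 2 * Suc t" by (simp add: algebra_simps)
  then show ?case unfolding cA using sA IH cx cA by simp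
qed

lemma int_interval_sum:
  fixes c :: int
  shows "2 * (\<Sum>i\<in>{c - int t..c - 1}. i) = int t * (2*c - int t - 1)"
proof (induction t)
  case 0 then show ?case by simp
next
  case (Suc t)
  have e: "{c - int (Suc t)..c-1} = insert (c - int t - 1) {c - int t..c - 1}" by auto
  have "(\<Sum>i\<in>{c - int (Suc t)..c-1}. i) = (c - int t - 1) + (\<Sum>i\<in>{c - int t..c - 1}. i)"
    unfolding e by (subst sum.insert) auto
  then show ?case using Suc by (simp add: algebra_simps)
qed


lemma gauss2: "2 * \<Sum>{1..(n::nat)} = n * (n+1)"
  by (induction n) (auto simp: atLeastAtMostSuc_conv)

lemma arith_ii:
  fixes Q R K T :: int
  assumes a1: "T \<le> R*(2*K-R-1)" and a2: "Q*(Q+1) \<le> T" and a3: "Q*(2*K-Q-1) < T"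
    and a4: "R \<le> Q" and a5: "R \<le> K-1" and a6: "0 \<le> R"
  shows False
proof -
  have e1: "R*(2*K-R-1) - Q*(2*K-Q-1) = (R-Q)*(2*K-1-R-Q)" by (simp add: algebra_simps)
  have p: "(R-Q)*(2*K-1-R-Q) > 0" using a1 a3 e1 by linarith
  have n2: "2*K-1-R-Q < 0"
  proof (rule ccontr)
    assume "\<not> 2*K-1-R-Q < 0"
    then have "(R-Q)*(2*K-1-R-Q) \<le> 0" using a4 by (simp add: mult_nonpos_nonneg)
    then show False using p by linarith
  qed
  have qk: "Q \<ge> K+1" using n2 a5 by linarith
  have b1: "(K+1)*(K+2) \<le> Q*(Q+1)" using qk a5 a6 by (intro mult_mono) auto
  have b2: "R*(2*K-R-1) = K*(K-1) - (K-R)*(K-R-1)" by (simp add: algebra_simps)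
  have b3: "(K-R)*(K-R-1) \<ge> 0" using a5 by simp
  have b4: "(K+1)*(K+2) = K*(K-1) + (4*K + 2)" by (simp add: algebra_simps)
  have "T \<le> K*(K-1)" using a1 b2 b3 by linarith
  moreover have "K*(K-1) + (4*K + 2) \<le> T" using b1 b4 a2 by linarith
  ultimately show False using a5 a6 by linarith
qed

theorem mainTheorem2:
  fixes n k e f p :: nat and P :: "nat list" and s :: int
  assumes "0 < k" and "k < n"
    and s_def: "s = int (n * (n + 1)) div int (2 * k)"
    and "int (2 * k) dvd int (n * (n + 1))" and "even s"
    and "ascending_partition n k P"
    and "0 < e" and "0 < f" and "3 \<le> p"
    and "\<forall>i<e. P ! i = 2"
    and "\<forall>i. e \<le> i \<and> i < e + f \<longrightarrow> P ! i = p"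
    and "\<forall>i. e + f \<le> i \<and> i < k \<longrightarrow> P ! i > p"
    and "e + f \<le> k"
  defines "c \<equiv> s - int n"
  defines "h \<equiv> int (card {x \<in> {1..n}. int x \<ge> c}) - 2 * int e"
  defines "m \<equiv> s div 2"
  defines "hup \<equiv> \<lceil>real_of_int h / 2\<rceil>"
  defines "hlo \<equiv> \<lfloor>real_of_int h / 2\<rfloor>"
  defines "g \<equiv> (if int f \<le> hlo then h - int f else hup - 2 * (int f - hlo))"
  assumes "m + (\<Sum>i\<in>{c - int p + 1..c - 1}. i) < s"
    and "g < 0 \<or>
         (g \<ge> 0 \<and> e + f + nat g < k \<and>
          (\<Sum>i\<in>{c - int (P ! (e + f + nat g))..c - 1}. i) < s)"
  shows "\<not> equitable n P"
proof
  have H1: "m + (\<Sum>i\<in>{c - int p + 1..c - 1}. i) < s" using assms(20) .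
  have H2: "g < 0 \<or> (g \<ge> 0 \<and> e + f + nat g < k \<and> (\<Sum>i\<in>{c - int (P ! (e + f + nat g))..c - 1}. i) < s)" using assms(21) .
  assume "equitable n P"
  then obtain A where AU0: "(\<Union>i<length P. A i) = {1..n}"
    and Adisj0: "\<forall>i<length P. \<forall>j<length P. i \<noteq> j \<longrightarrow> A i \<inter> A j = {}"
    and Acard0: "\<forall>i<length P. card (A i) = P ! i"
    and Asum0: "\<forall>i<length P. \<forall>j<length P. \<Sum>(A i) = \<Sum>(A j)"
    unfolding equitable_def by blast
  have lenP: "length P = k" and sortP: "sorted P" and sumP: "sum_list P = n"
    using assms(6) unfolding ascending_partition_def by auto
  have AU: "(\<Union>i<k. A i) = {1..n}" using AU0 lenP by simp
  have Adisj: "\<And>i j. i<k \<Longrightarrow> j<k \<Longrightarrow> i \<noteq> j \<Longrightarrow> A i \<inter> A j = {}" using Adisj0 lenP by auto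
  have Acard: "\<And>i. i<k \<Longrightarrow> card (A i) = P ! i" using Acard0 lenP by auto
  have Asub: "\<And>i. i<k \<Longrightarrow> A i \<subseteq> {1..n}" using AU by blast
  have Afin: "\<And>i. i<k \<Longrightarrow> finite (A i)"
  proof -
    fix i assume "i<k"
    then show "finite (A i)" using Asub[of i] finite_subset[of "A i" "{1..n}"] by simp
  qed
  define S where "S = \<Sum>(A 0)"
  have AS: "\<And>i. i<k \<Longrightarrow> \<Sum>(A i) = S"
  proof -
    fix i assume "i<k"
    then show "\<Sum>(A i) = S" using Asum0[rule_format, of i 0] lenP assms(1) unfolding S_def by simp
  qed
  have "\<Sum>(\<Union>(A ` {..<k})) = (\<Sum>i<k. \<Sum>(A i))"
    by (rule sum.UNION_disjoint) (use Afin Adisj in auto)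
  then have "\<Sum>{1..n} = (\<Sum>i<k. \<Sum>(A i))" using AU by simp
  also have "\<dots> = (\<Sum>i<k. S)" using AS by simp
  finally have tot: "\<Sum>{1..n} = k * S" by simp
  have kS: "2*k*S = n*(n+1)" using tot gauss2[of n] by simp
  have sS: "s = int S"
  proof -
    have "int (n * (n + 1)) = int (2*k) * int S" using kS by (metis of_nat_mult)
    then show ?thesis unfolding s_def using assms(1) by simp
  qed
  obtain M where SM: "S = 2*M" using assms(5) sS by (metis even_of_nat evenE)
  have mM: "m = int M" unfolding m_def sS SM by simp
  have ek: "e < k" using assms(8,13) by simp
  have P2: "\<And>i. i<k \<Longrightarrow> 2 \<le> P ! i"
  proof -
    fix i assume "i<k"
    show "2 \<le> P ! i"
    proof (cases "i<e")
      case True then show ?thesis using assms(10) by simp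
    next
      case False
      show ?thesis
      proof (cases "i<e+f")
        case True then have "P ! i = p" using assms(11) False by simp
        then show ?thesis using assms(9) by simp
      next
        case F2: False then have "p < P ! i" using assms(12) \<open>i<k\<close> by simp
        then show ?thesis using assms(9) by simp
      qed
    qed
  qed
  have Pe: "P ! e = p" using assms(8,11) by simp
  have sumn: "n = (\<Sum>i<k. P ! i)" using sumP lenP by (simp add: sum_list_sum_nth atLeast0LessThan)
  have n21: "2*k+1 \<le> n"
  proof -
    have "(\<Sum>i<k. P ! i) = (\<Sum>i<k. 2 + (P ! i - 2))"
    proof (rule sum.cong)
      fix x assume "x \<in> {..<k}"
      then have "2 \<le> P ! x" using P2 by simp
      then show "P ! x = 2 + (P ! x - 2)" by simp
    qed simp
    also have "\<dots> = (\<Sum>i<k. 2) + (\<Sum>i<k. P ! i - 2)" by (rule sum.distrib)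
    finally have "(\<Sum>i<k. P ! i) = (\<Sum>i<k. 2) + (\<Sum>i<k. P ! i - 2)" .
    moreover have "P ! e - 2 \<le> (\<Sum>i<k. P ! i - 2)"
      using ek by (intro member_le_sum) auto
    ultimately show ?thesis using sumn Pe assms(9) by simp
  qed
  have Sn: "n + 1 < S"
  proof -
    have "(2*k+1)*(n+1) \<le> n*(n+1)" using n21 by (intro mult_right_mono) auto
    then have "2*k*(n+1) < 2*k*S" using kS by (simp add: algebra_simps)
    then show ?thesis by (simp only: mult_less_cancel1)
  qed
  define cN where "cN = S - n"
  have cc: "c = int cN" unfolding c_def cN_def sS using Sn by simp
  have cN1: "1 \<le> cN" using Sn cN_def by simp
  have two: "\<And>i. i<e \<Longrightarrow> \<exists>x y. A i = {x,y} \<and> x \<noteq> y \<and> x + y = S \<and> x \<in> {1..n} \<and> y \<in> {1..n}"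
  proof -
    fix i assume ie: "i<e"
    then have ik: "i<k" using ek by simp
    have "card (A i) = 2" using Acard[OF ik] assms(10) ie by simp
    then obtain x y where xy: "A i = {x,y}" "x \<noteq> y" by (auto simp: card_2_iff)
    have "x + y = S" using AS[OF ik] xy by simp
    moreover have "x \<in> {1..n}" "y \<in> {1..n}" using Asub[OF ik] xy by auto
    ultimately show "\<exists>x y. A i = {x,y} \<and> x \<noteq> y \<and> x + y = S \<and> x \<in> {1..n} \<and> y \<in> {1..n}"
      using xy by blast
  qed
  obtain x0 y0 where xy0: "A 0 = {x0,y0}" "x0 \<noteq> y0" "x0 + y0 = S" "x0 \<in> {1..n}" "y0 \<in> {1..n}"
    using two[of 0] assms(7) by blast
  have S2n: "S < 2*n" using xy0 by auto
  have Mn: "M < n" using S2n SM by simp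
  have cNM: "cN \<le> M" using cN_def SM Mn by simp
  have cNv: "cN = 2*M - n" using cN_def SM by simp
  define C where "C = {cN..n}"
  define B where "B = {Suc M..n}"
  define L where "L = {cN..M}"
  have finC: "finite C" "finite B" "finite L" unfolding C_def B_def L_def by simp_all
  have cardC: "card C = 2*(n-M)+1" unfolding C_def using cNv Sn SM Mn by simp
  have cardB: "card B = n - M" unfolding B_def by simp
  have cardL: "card L = n - M + 1" unfolding L_def using cNv Sn SM Mn by simp
  have CBL: "C = B \<union> L" unfolding C_def B_def L_def using cNM Mn by auto
  have BC: "B \<subseteq> C" using CBL by blast
  have Cset: "{x \<in> {1..n}. int x \<ge> c} = C" using cc cN1 by (auto simp: C_def)
  define K where "K = int (n - M) - int e"
  have hK: "h = 2*K+1" unfolding h_def Cset cardC K_def by simp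
  have hloK: "hlo = K"
  proof -
    have "real_of_int h / 2 = real_of_int K + 1/2" using hK by simp
    then show ?thesis unfolding hlo_def by (simp add: floor_eq_iff)
  qed
  have hupK: "hup = K + 1"
  proof -
    have "real_of_int h / 2 = real_of_int K + 1/2" using hK by simp
    then show ?thesis unfolding hup_def by (simp add: ceiling_eq_iff)
  qed
  have twoC: "\<And>i. i<e \<Longrightarrow> A i \<subseteq> C \<and> A i \<inter> B \<noteq> {} \<and> A i \<inter> L \<noteq> {}"
  proof -
    fix i assume ie: "i<e"
    obtain x y where xy: "A i = {x,y}" "x \<noteq> y" "x + y = S" "x \<in> {1..n}" "y \<in> {1..n}"
      using two[OF ie] by blast
    have "x \<in> C" "y \<in> C" using xy unfolding C_def cN_def by auto
    moreover have "(x \<in> B \<and> y \<in> L) \<or> (y \<in> B \<and> x \<in> L)"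
      using xy \<open>x \<in> C\<close> \<open>y \<in> C\<close> SM unfolding B_def L_def C_def by auto
    ultimately show "A i \<subseteq> C \<and> A i \<inter> B \<noteq> {} \<and> A i \<inter> L \<noteq> {}" using xy by auto
  qed
  have pp: "int cN - int p + 1 = int cN - int (p-1)" using assms(9) by simp
  have Hp: "int M + (\<Sum>i\<in>{int cN - int (p-1)..int cN - 1}. i) < int S"
    using H1 unfolding mM sS cc pp .
  have Hp2: "2*int M + int (p-1) * (2*int cN - int (p-1) - 1) < 2 * int S"
    using Hp int_interval_sum[of "int cN" "p-1"] by linarith
  have partb: "\<And>i. e \<le> i \<Longrightarrow> i < e+f \<Longrightarrow> A i \<inter> B = {} \<Longrightarrow> 2 \<le> card (A i \<inter> C)"
  proof (rule ccontr)
    fix i assume i1: "e \<le> i" "i < e+f" and iB: "A i \<inter> B = {}" and nc: "\<not> 2 \<le> card (A i \<inter> C)"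
    have ik: "i<k" using i1 assms(13) by simp
    have cp: "card (A i) = p" using Acard[OF ik] assms(11) i1 by simp
    have fin: "finite (A i)" using Afin ik .
    define D where "D = A i - C"
    have Dsub: "D \<subseteq> {1..<cN}" using Asub[OF ik] unfolding D_def C_def by auto
    have finD: "finite D" using fin D_def by simp
    have cD: "card D = p - card (A i \<inter> C)" unfolding D_def using card_Diff_subset_Int[of "A i" C] fin cp by simp
    have sD: "S = \<Sum>D + \<Sum>(A i \<inter> C)" using sum.Int_Diff[OF fin, of "\<lambda>x. x" C] AS[OF ik] D_def by simp
    have ICL: "A i \<inter> C \<subseteq> {cN..M}" using iB unfolding B_def C_def by auto
    have topD: "2 * int (\<Sum>D) \<le> int (card D) * (2*int cN - int (card D) - 1)" using top_sum[OF finD Dsub] .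
    consider "card (A i \<inter> C) = 0" | "card (A i \<inter> C) = 1" using nc by linarith
    then show False
    proof cases
      case 1
      then have "A i \<inter> C = {}" using fin by simp
      then have "S = \<Sum>D" using sD by simp
      with topD 1 cD have t1: "2*int S \<le> int p * (2*int cN - int p - 1)" by simp
      have id: "int p * (2*int cN - int p - 1) = int (p-1) * (2*int cN - int (p-1) - 1) + (2*int cN - 2*int p)"
        using assms(9) by (simp add: algebra_simps of_nat_diff)
      show False using Hp2 SM cNM t1 id by linarith
    next
      case 2
      then obtain z where z: "A i \<inter> C = {z}" by (auto simp: card_1_singleton_iff)
      then have "z \<le> M" using ICL by auto
      moreover have "S = \<Sum>D + z" using sD z by simp
      moreover have "card D = p - 1" using cD 2 by simp
      ultimately show False using topD Hp2 SM by simp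
    qed
  qed
  have cnt: "\<And>(I::nat set) (Z::nat set). I \<subseteq> {..<k} \<Longrightarrow> finite Z \<Longrightarrow> (\<Sum>i\<in>I. card (A i \<inter> Z)) \<le> card Z"
  proof -
    fix I Z :: "nat set" assume I: "I \<subseteq> {..<k}" and fD: "finite Z"
    have fI: "finite I" using I finite_subset[OF I] by simp
    have "card (\<Union>i\<in>I. A i \<inter> Z) = (\<Sum>i\<in>I. card (A i \<inter> Z))"
    proof (rule card_UN_disjoint)
      show "finite I" using fI .
      show "\<forall>i\<in>I. finite (A i \<inter> Z)" using fD by simp
      show "\<forall>i\<in>I. \<forall>j\<in>I. i \<noteq> j \<longrightarrow> A i \<inter> Z \<inter> (A j \<inter> Z) = {}" using Adisj I by blast
    qed
    moreover have "card (\<Union>i\<in>I. A i \<inter> Z) \<le> card Z" by (rule card_mono) (use fD in auto)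
    ultimately show "(\<Sum>i\<in>I. card (A i \<inter> Z)) \<le> card Z" by simp
  qed
  have low: "\<And>(I::nat set) (Z::nat set) (w::nat). finite I \<Longrightarrow> (\<And>i. i \<in> I \<Longrightarrow> w \<le> card (A i \<inter> Z)) \<Longrightarrow> w * card I \<le> (\<Sum>i\<in>I. card (A i \<inter> Z))"
  proof -
    fix I Z :: "nat set" and w :: nat assume fI: "finite I" and wl: "\<And>i. i \<in> I \<Longrightarrow> w \<le> card (A i \<inter> Z)"
    have "(\<Sum>i\<in>I. w) \<le> (\<Sum>i\<in>I. card (A i \<inter> Z))" using wl by (rule sum_mono)
    then show "w * card I \<le> (\<Sum>i\<in>I. card (A i \<inter> Z))" by (simp add: mult.commute)
  qed
  have ne1: "\<And>i (Z::nat set). i<k \<Longrightarrow> A i \<inter> Z \<noteq> {} \<Longrightarrow> 1 \<le> card (A i \<inter> Z)"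
  proof -
    fix i :: nat and Z :: "nat set" assume "i<k" "A i \<inter> Z \<noteq> {}"
    moreover have "finite (A i \<inter> Z)" using Afin[OF \<open>i<k\<close>] by simp
    ultimately show "1 \<le> card (A i \<inter> Z)" by (simp add: Suc_le_eq card_gt_0_iff)
  qed
  define E where "E = {..<e}"
  define U where "U = {e..<e+f}"
  define X where "X = {i\<in>U. A i \<inter> B \<noteq> {}}"
  have XU: "X \<subseteq> U" unfolding X_def by auto
  have finEU: "finite E" "finite U" "finite X" "finite (U - X)" unfolding E_def U_def X_def by auto
  have cE: "card E = e" unfolding E_def by simp
  have cU: "card U = f" unfolding U_def by simp
  define a where "a = card X"
  have aU: "a \<le> f" unfolding a_def using card_mono[OF finEU(2) XU] cU by simp
  have cUX: "card (U - X) = f - a" unfolding a_def using card_Diff_subset[OF finEU(3) XU] cU by simp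
  have Ek: "E \<subseteq> {..<k}" unfolding E_def using ek by auto
  have Uk: "U \<subseteq> {..<k}" unfolding U_def using assms(13) by auto
  have dEU: "E \<inter> U = {}" unfolding E_def U_def by auto
  have alpha: "e + a \<le> n - M"
  proof -
    have "(\<Sum>i\<in>E \<union> X. card (A i \<inter> B)) \<le> card B" using cnt[of "E \<union> X" B] Ek Uk XU finC by blast
    moreover have "(\<Sum>i\<in>E \<union> X. card (A i \<inter> B)) = (\<Sum>i\<in>E. card (A i \<inter> B)) + (\<Sum>i\<in>X. card (A i \<inter> B))"
      by (rule sum.union_disjoint) (use finEU dEU XU in auto)
    moreover have "1 * card E \<le> (\<Sum>i\<in>E. card (A i \<inter> B))"
      by (rule low) (use finEU twoC ne1 Ek E_def in auto)
    moreover have "1 * card X \<le> (\<Sum>i\<in>X. card (A i \<inter> B))"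
      by (rule low) (use finEU ne1 Uk XU X_def in auto)
    ultimately show ?thesis using cE cardB a_def by simp
  qed
  have UXC: "\<And>i. i \<in> U - X \<Longrightarrow> 2 \<le> card (A i \<inter> L) \<and> 2 \<le> card (A i \<inter> C)"
  proof -
    fix i assume iu: "i \<in> U - X"
    then have "A i \<inter> B = {}" "e \<le> i" "i < e+f" unfolding X_def U_def by auto
    then have "2 \<le> card (A i \<inter> C)" using partb by blast
    moreover have "A i \<inter> C = A i \<inter> L" using \<open>A i \<inter> B = {}\<close> CBL by blast
    ultimately show "2 \<le> card (A i \<inter> L) \<and> 2 \<le> card (A i \<inter> C)" by simp
  qed
  have beta: "e + 2*(f - a) \<le> n - M + 1"
  proof -
    have "(\<Sum>i\<in>E \<union> (U - X). card (A i \<inter> L)) \<le> card L" using cnt[of "E \<union> (U-X)" L] Ek Uk finC by blast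
    moreover have "(\<Sum>i\<in>E \<union> (U-X). card (A i \<inter> L)) = (\<Sum>i\<in>E. card (A i \<inter> L)) + (\<Sum>i\<in>U-X. card (A i \<inter> L))"
      by (rule sum.union_disjoint) (use finEU dEU in auto)
    moreover have "1 * card E \<le> (\<Sum>i\<in>E. card (A i \<inter> L))"
      by (rule low) (use finEU twoC ne1 Ek E_def in auto)
    moreover have "2 * card (U-X) \<le> (\<Sum>i\<in>U-X. card (A i \<inter> L))"
      by (rule low) (use finEU UXC in auto)
    ultimately show ?thesis using cE cardL cUX by simp
  qed
  have gam: "\<And>V w. V \<subseteq> {..<k} \<Longrightarrow> finite V \<Longrightarrow> V \<inter> (E \<union> U) = {} \<Longrightarrow> (\<And>i. i \<in> V \<Longrightarrow> 1 \<le> card (A i \<inter> C)) \<Longrightarrow> 2*e + a + 2*(f-a) + card V \<le> 2*(n-M)+1"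
  proof -
    fix V :: "nat set" and w :: nat assume Vk: "V \<subseteq> {..<k}" and fV: "finite V" and dV: "V \<inter> (E \<union> U) = {}" and V1: "\<And>i. i \<in> V \<Longrightarrow> 1 \<le> card (A i \<inter> C)"
    have "(\<Sum>i\<in>E \<union> X \<union> (U - X) \<union> V. card (A i \<inter> C)) \<le> card C" using cnt[of "E \<union> X \<union> (U - X) \<union> V" C] Ek Uk Vk finC XU by blast
    moreover have "(\<Sum>i\<in>E \<union> X \<union> (U - X) \<union> V. card (A i \<inter> C)) = (\<Sum>i\<in>E \<union> X \<union> (U - X). card (A i \<inter> C)) + (\<Sum>i\<in>V. card (A i \<inter> C))"
      by (rule sum.union_disjoint) (use finEU fV dV XU in auto)
    moreover have "(\<Sum>i\<in>E \<union> X \<union> (U - X). card (A i \<inter> C)) = (\<Sum>i\<in>E \<union> X. card (A i \<inter> C)) + (\<Sum>i\<in>U - X. card (A i \<inter> C))"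
      by (rule sum.union_disjoint) (use finEU XU dEU in auto)
    moreover have "(\<Sum>i\<in>E \<union> X. card (A i \<inter> C)) = (\<Sum>i\<in>E. card (A i \<inter> C)) + (\<Sum>i\<in>X. card (A i \<inter> C))"
      by (rule sum.union_disjoint) (use finEU dEU XU in auto)
    moreover have "2 * card E \<le> (\<Sum>i\<in>E. card (A i \<inter> C))"
    proof (rule low)
      show "finite E" using finEU by simp
      fix i assume "i \<in> E"
      then have "i < e" "i < k" using E_def ek by auto
      then have "A i \<inter> C = A i" using twoC by blast
      then show "2 \<le> card (A i \<inter> C)" using Acard[OF \<open>i<k\<close>] assms(10) \<open>i<e\<close> by simp
    qed
    moreover have "1 * card X \<le> (\<Sum>i\<in>X. card (A i \<inter> C))"
    proof (rule low)
      show "finite X" using finEU by simp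
      fix i assume "i \<in> X"
      then have "A i \<inter> C \<noteq> {}" "i<k" using X_def BC Uk XU by auto
      then show "1 \<le> card (A i \<inter> C)" using ne1 by blast
    qed
    moreover have "2 * card (U - X) \<le> (\<Sum>i\<in>U - X. card (A i \<inter> C))"
      by (rule low) (use finEU UXC in auto)
    moreover have "1 * card V \<le> (\<Sum>i\<in>V. card (A i \<inter> C))"
      by (rule low) (use fV V1 in auto)
    ultimately show "2*e + a + 2*(f-a) + card V \<le> 2*(n-M)+1" using cE cardC cUX a_def by simp
  qed
  have gamma0: "2*e + a + 2*(f-a) \<le> 2*(n-M)+1" using gam[of "{}"] by simp
  show False
  proof (cases "g < 0")
    case True
    show False
    proof (cases "int f \<le> hlo")
      case True
      then show False using \<open>g<0\<close> alpha unfolding g_def hK hloK K_def using Mn aU by (simp split: if_splits; arith)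
    next
      case False
      then show False using \<open>g<0\<close> alpha beta aU unfolding g_def hK hloK hupK K_def using Mn aU by (simp split: if_splits; arith)
    qed
  next
    case False
    then have g0: "g \<ge> 0" and jk: "e + f + nat g < k" and Hq: "(\<Sum>i\<in>{c - int (P ! (e + f + nat g))..c - 1}. i) < s"
      using H2 by auto
    define j where "j = e + f + nat g"
    define V where "V = {e+f..j}"
    have partc: "\<And>i. i \<in> V \<Longrightarrow> A i \<inter> C \<noteq> {}"
    proof
      fix i assume iV: "i \<in> V" and emp: "A i \<inter> C = {}"
      have ik: "i < k" using iV jk V_def j_def by auto
      have ij: "i \<le> j" using iV V_def by auto
      have jk': "j < k" using jk j_def by simp
      have pi: "p < P ! i" using assms(12) iV V_def ik by auto
      have qq: "P ! i \<le> P ! j" using sorted_nth_mono[OF sortP ij] jk' lenP by simp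
      have Ai: "A i \<subseteq> {1..<cN}"
      proof
        fix x assume xA: "x \<in> A i"
        then have "x \<in> {1..n}" using Asub[OF ik] by blast
        moreover have "x \<notin> C" using emp xA by blast
        ultimately show "x \<in> {1..<cN}" unfolding C_def by simp
      qed
      have t1: "2 * int S \<le> int (P ! i) * (2 * int cN - int (P ! i) - 1)"
        using top_sum[OF Afin[OF ik] Ai] Acard[OF ik] AS[OF ik] by simp
      have "card (A i) \<le> card {1..<cN}" using Ai by (intro card_mono) simp_all
      then have t2: "P ! i \<le> cN - 1" using Acard[OF ik] by simp
      have "0 \<notin> A j" using Asub[OF jk'] by auto
      then have t3: "P ! j * (P ! j + 1) \<le> 2 * S" using low_sum[OF Afin[OF jk']] Acard[OF jk'] AS[OF jk'] by simp
      have t4: "2 * (\<Sum>i\<in>{c - int (P ! j)..c - 1}. i) < 2 * s" using Hq j_def by simp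
      have t5: "int (P ! j) * (2 * int cN - int (P ! j) - 1) < 2 * int S"
        using t4 int_interval_sum[of c "P ! j"] cc sS by simp
      show False
      proof (rule arith_ii)
        show "2 * int S \<le> int (P ! i) * (2 * int cN - int (P ! i) - 1)" using t1 .
        show "int (P ! j) * (int (P ! j) + 1) \<le> 2 * int S" using t3
          by (metis of_nat_le_iff of_nat_mult of_nat_add of_nat_1 of_nat_numeral)
        show "int (P ! j) * (2 * int cN - int (P ! j) - 1) < 2 * int S" using t5 .
        show "int (P ! i) \<le> int (P ! j)" using qq by simp
        show "int (P ! i) \<le> int cN - 1" using t2 cN1 by simp
        show "0 \<le> int (P ! i)" by simp
      qed
    qed
    have "2*e + a + 2*(f-a) + card V \<le> 2*(n-M)+1"
    proof (rule gam)
      show "V \<subseteq> {..<k}" using jk V_def j_def by auto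
      show "finite V" using V_def by simp
      show "V \<inter> (E \<union> U) = {}" using V_def E_def U_def by auto
      fix i assume "i \<in> V"
      then show "1 \<le> card (A i \<inter> C)" using partc ne1 jk V_def j_def by auto
    qed
    moreover have "card V = nat g + 1" using V_def j_def by simp
    ultimately show False
    proof (cases "int f \<le> hlo")
      case True
      then show False using \<open>2*e + a + 2*(f-a) + card V \<le> 2*(n-M)+1\<close> \<open>card V = nat g + 1\<close> g0 aU alpha
        unfolding g_def hK hloK K_def using Mn aU by (simp split: if_splits; arith)
    next
      case False
      then show False using \<open>2*e + a + 2*(f-a) + card V \<le> 2*(n-M)+1\<close> \<open>card V = nat g + 1\<close> g0 aU alpha beta
        unfolding g_def hK hloK hupK K_def using Mn aU by (simp split: if_splits; arith)
    qed
  qed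
qed

end
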